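(* Let $\mathcal{X},\mathcal{Y}$ be finite sets, $P_{XY}$ a distribution on $\mathcal{X}\times\mathcal{Y}$, and $\mu\ge0$. Then $$\lim_{\delta\to0}R_\mu(\delta\mid P_{XY})=R_\mu(P_{XY}).$$
   Context: For $\delta\ge0$, $\mathcal{R}^*_{\mathtt{WAK}}(\delta\mid P_{XY})$ is the set of pairs $(r_0,r_2)$ for which there exists a conditional distribution $P_{W|XY}$ with finite $\mathcal{W}$, $|\mathcal{W}|\le|\mathcal{X}||\mathcal{Y}|+2$, such that, for $(W,X,Y)\sim P_{XY}P_{W|XY}$, $r_0\ge I(W\wedge X,Y)$, $r_2\ge H(Y\mid W)$ and $\delta\ge I(W\wedge Y\mid X)$. For $\mu\ge0$, $R_\mu(\delta\mid P_{XY}):=\min\{r_0+\mu r_2:(r_0,r_2)\in\mathcal{R}^*_{\mathtt{WAK}}(\delta\mid P_{XY})\}$, and $R_\mu(P_{XY}):=R_\mu(0\mid P_{XY})$. *)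

theory Defs
  imports "HOL-Analysis.Analysis" "HOL-Probability.Probability_Mass_Function"
begin

text \<open>Auxiliary alphabet W is a finite subset of nat; conditional distribution
  V x y w = P_{W|XY}(w|x,y). Logarithms base 2, convention 0 log 0 = 0.\<close>

definition cond_dist_on :: "nat set \<Rightarrow> ('x \<Rightarrow> 'y \<Rightarrow> nat \<Rightarrow> real) \<Rightarrow> bool" where
  "cond_dist_on W V \<longleftrightarrow> finite W \<and>
     (\<forall>x y w. 0 \<le> V x y w) \<and> (\<forall>x y w. w \<notin> W \<longrightarrow> V x y w = 0) \<and>
     (\<forall>x y. (\<Sum>w\<in>W. V x y w) = 1)"

definition jointp :: "('x \<times> 'y) pmf \<Rightarrow> ('x \<Rightarrow> 'y \<Rightarrow> nat \<Rightarrow> real) \<Rightarrow> nat \<Rightarrow> 'x \<Rightarrow> 'y \<Rightarrow> real" where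
  "jointp P V w x y = pmf P (x, y) * V x y w"

definition pW :: "('x::finite \<times> 'y::finite) pmf \<Rightarrow> ('x \<Rightarrow> 'y \<Rightarrow> nat \<Rightarrow> real) \<Rightarrow> nat \<Rightarrow> real" where
  "pW P V w = (\<Sum>x\<in>UNIV. \<Sum>y\<in>UNIV. jointp P V w x y)"

definition pX :: "('x::finite \<times> 'y::finite) pmf \<Rightarrow> 'x \<Rightarrow> real" where
  "pX P x = (\<Sum>y\<in>UNIV. pmf P (x, y))"

definition pWX :: "('x::finite \<times> 'y::finite) pmf \<Rightarrow> ('x \<Rightarrow> 'y \<Rightarrow> nat \<Rightarrow> real) \<Rightarrow> nat \<Rightarrow> 'x \<Rightarrow> real" where
  "pWX P V w x = (\<Sum>y\<in>UNIV. jointp P V w x y)"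

definition pWY :: "('x::finite \<times> 'y::finite) pmf \<Rightarrow> ('x \<Rightarrow> 'y \<Rightarrow> nat \<Rightarrow> real) \<Rightarrow> nat \<Rightarrow> 'y \<Rightarrow> real" where
  "pWY P V w y = (\<Sum>x\<in>UNIV. jointp P V w x y)"

definition MI_W_XY :: "nat set \<Rightarrow> ('x::finite \<times> 'y::finite) pmf \<Rightarrow> ('x \<Rightarrow> 'y \<Rightarrow> nat \<Rightarrow> real) \<Rightarrow> real" where
  "MI_W_XY W P V = (\<Sum>w\<in>W. \<Sum>x\<in>UNIV. \<Sum>y\<in>UNIV.
     (let p = jointp P V w x y in
      if p = 0 then 0 else p * log 2 (p / (pW P V w * pmf P (x, y)))))"

definition CH_Y_W :: "nat set \<Rightarrow> ('x::finite \<times> 'y::finite) pmf \<Rightarrow> ('x \<Rightarrow> 'y \<Rightarrow> nat \<Rightarrow> real) \<Rightarrow> real" where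
  "CH_Y_W W P V = (\<Sum>w\<in>W. \<Sum>y\<in>UNIV.
     (let p = pWY P V w y in
      if p = 0 then 0 else - p * log 2 (p / pW P V w)))"

definition CMI_W_Y_X :: "nat set \<Rightarrow> ('x::finite \<times> 'y::finite) pmf \<Rightarrow> ('x \<Rightarrow> 'y \<Rightarrow> nat \<Rightarrow> real) \<Rightarrow> real" where
  "CMI_W_Y_X W P V = (\<Sum>w\<in>W. \<Sum>x\<in>UNIV. \<Sum>y\<in>UNIV.
     (let p = jointp P V w x y in
      if p = 0 then 0 else p * log 2 (p * pX P x / (pWX P V w x * pmf P (x, y)))))"

definition WAK_region :: "real \<Rightarrow> ('x::finite \<times> 'y::finite) pmf \<Rightarrow> (real \<times> real) set" where
  "WAK_region \<delta> P = {(r0, r2). \<exists>W V. cond_dist_on W V \<and>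
       card W \<le> CARD('x) * CARD('y) + 2 \<and>
       r0 \<ge> MI_W_XY W P V \<and> r2 \<ge> CH_Y_W W P V \<and> \<delta> \<ge> CMI_W_Y_X W P V}"

definition R_mu :: "real \<Rightarrow> real \<Rightarrow> ('x::finite \<times> 'y::finite) pmf \<Rightarrow> real" where
  "R_mu \<mu> \<delta> P = Inf {r0 + \<mu> * r2 | r0 r2. (r0, r2) \<in> WAK_region \<delta> P}"

end

theory Submission
  imports Defs "HOL-Real_Asymp.Real_Asymp"
begin

definition gg :: "real \<Rightarrow> real" where "gg t = t * log 2 t"

lemma gg0[simp]: "gg 0 = 0" and gg1[simp]: "gg 1 = 0" by (auto simp: gg_def)

lemma gg_le0: "0 \<le> t \<Longrightarrow> t \<le> 1 \<Longrightarrow> gg t \<le> 0"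
  unfolding gg_def by (cases "t = 0") (auto intro!: mult_nonneg_nonpos)

lemma gg_ge: "0 \<le> t \<Longrightarrow> gg t \<ge> - 1 / ln 2"
proof (cases "t = 0")
  case False
  assume t: "0 \<le> t"
  with False have tp: "t > 0" by simp
  have "ln (1/t) \<le> 1/t - 1" using tp by (intro ln_le_minus_one) simp
  hence "- ln t \<le> 1/t - 1" using tp by (simp add: ln_div)
  hence "t * (- ln t) \<le> t * (1/t - 1)" using tp by (intro mult_left_mono) auto
  hence "t * ln t \<ge> t - 1" using tp by (simp add: algebra_simps)
  hence "t * ln t \<ge> -1" using tp by linarith
  hence "t * ln t / ln 2 \<ge> -1 / ln 2" by (intro divide_right_mono) auto
  thus ?thesis by (simp add: gg_def log_def)
qed simp

lemma gg_cont: "continuous_on {0..} gg"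
proof -
  have "continuous (at t within {0..}) gg" if t: "t \<ge> 0" for t
  proof (cases "t = 0")
    case True
    have "((\<lambda>x::real. x * ln x / ln 2) \<longlongrightarrow> 0) (at_right 0)" by real_asymp
    moreover have "gg = (\<lambda>x. x * ln x / ln 2)" by (auto simp: gg_def log_def fun_eq_iff)
    ultimately have "(gg \<longlongrightarrow> 0) (at_right 0)" by simp
    moreover have "at (0::real) within {0..} = at_right 0"
    proof -
      have "{0::real..} - {0} = {0<..}" by auto
      thus ?thesis by (simp add: at_within_def)
    qed
    ultimately show ?thesis using True by (simp add: continuous_within)
  next
    case False
    hence "isCont gg t" using t unfolding gg_def by (intro continuous_intros) auto
    thus ?thesis by (simp add: continuous_at_imp_continuous_within)
  qed
  thus ?thesis by (simp add: continuous_on_eq_continuous_within)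
qed

lemma gg_tendsto:
  assumes "f \<longlonglongrightarrow> l" "\<And>n. f n \<ge> 0"
  shows "(\<lambda>n. gg (f n)) \<longlonglongrightarrow> gg l"
proof -
  have "l \<ge> 0" using assms by (intro LIMSEQ_le_const) auto
  thus ?thesis using continuous_on_tendsto_compose[OF gg_cont assms(1)] assms(2) by auto
qed

lemma sum_pmf1: "(\<Sum>x\<in>UNIV. \<Sum>y\<in>UNIV. pmf (P::('x::finite \<times> 'y::finite) pmf) (x, y)) = 1"
proof -
  have "(\<Sum>x\<in>UNIV. \<Sum>y\<in>UNIV. pmf P (x, y)) = (\<Sum>z\<in>UNIV \<times> UNIV. pmf P z)"
    by (simp add: sum.cartesian_product)
  also have "\<dots> = 1" by (simp add: sum_pmf_eq_1)
  finally show ?thesis .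
qed

context
  fixes P :: "('x::finite \<times> 'y::finite) pmf" and W :: "nat set" and V :: "'x \<Rightarrow> 'y \<Rightarrow> nat \<Rightarrow> real"
  assumes cd: "cond_dist_on W V"
begin

lemma fW: "finite W" using cd by (simp add: cond_dist_on_def)
lemma Vnn: "V x y w \<ge> 0" using cd by (simp add: cond_dist_on_def)
lemma Vout: "w \<notin> W \<Longrightarrow> V x y w = 0" using cd by (simp add: cond_dist_on_def)
lemma Vsum: "(\<Sum>w\<in>W. V x y w) = 1" using cd by (simp add: cond_dist_on_def)

lemma jnn: "jointp P V w x y \<ge> 0" by (simp add: jointp_def Vnn)
lemma pWnn: "pW P V w \<ge> 0" by (simp add: pW_def jnn sum_nonneg)
lemma pWYnn: "pWY P V w y \<ge> 0" by (simp add: pWY_def jnn sum_nonneg)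
lemma pWXnn: "pWX P V w x \<ge> 0" by (simp add: pWX_def jnn sum_nonneg)
lemma pXnn: "pX P x \<ge> 0" by (simp add: pX_def sum_nonneg)

lemma j_le_pWX: "jointp P V w x y \<le> pWX P V w x"
  unfolding pWX_def by (rule member_le_sum) (auto simp: jnn)
lemma pWX_le_pW: "pWX P V w x \<le> pW P V w"
  unfolding pW_def pWX_def[symmetric] by (rule member_le_sum) (auto simp: pWXnn)
lemma j_le_pW: "jointp P V w x y \<le> pW P V w"
  using j_le_pWX pWX_le_pW order_trans by blast
lemma pWY_le_pW: "pWY P V w y \<le> pW P V w"
proof -
  have "pW P V w = (\<Sum>y\<in>UNIV. pWY P V w y)" unfolding pW_def pWY_def by (rule sum.swap)
  thus ?thesis by (metis member_le_sum pWYnn finite UNIV_I)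
qed
lemma pmf_le_pX: "pmf P (x,y) \<le> pX P x"
  unfolding pX_def by (rule member_le_sum) auto

lemma sum_pW: "(\<Sum>w\<in>W. pW P V w) = 1"
proof -
  have "(\<Sum>w\<in>W. pW P V w) = (\<Sum>x\<in>UNIV. \<Sum>y\<in>UNIV. pmf P (x,y) * (\<Sum>w\<in>W. V x y w))"
    unfolding pW_def jointp_def sum_distrib_left
    by (subst sum.swap, rule sum.cong, simp, subst sum.swap, simp)
  also have "\<dots> = 1" by (simp add: Vsum sum_pmf1)
  finally show ?thesis .
qed

lemma pW_le1: "pW P V w \<le> 1"
proof (cases "w \<in> W")
  case True thus ?thesis using sum_pW fW by (metis member_le_sum pWnn)
next
  case False thus ?thesis by (simp add: pW_def jointp_def Vout)
qed

lemma V_le1: "V x y w \<le> 1"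
proof (cases "w \<in> W")
  case True thus ?thesis using Vsum fW by (metis member_le_sum Vnn)
next
  case False thus ?thesis by (simp add: Vout)
qed

lemma MI_term: "(let p = jointp P V w x y in
      if p = 0 then 0 else p * log 2 (p / (pW P V w * pmf P (x, y))))
   = pmf P (x,y) * gg (V x y w) - jointp P V w x y * log 2 (pW P V w)"
proof (cases "jointp P V w x y = 0")
  case True
  hence "pmf P (x,y) = 0 \<or> V x y w = 0" by (simp add: jointp_def)
  thus ?thesis using True by (auto simp: gg_def)
next
  case False
  hence a: "pmf P (x,y) > 0" "V x y w > 0" using Vnn[of x y w] pmf_nonneg[of P "(x,y)"]
    by (auto simp: jointp_def less_le)
  have b: "pW P V w > 0" using j_le_pW[of w x y] False jnn[of w x y] by linarith
  have "jointp P V w x y / (pW P V w * pmf P (x, y)) = V x y w / pW P V w"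
    using a by (simp add: jointp_def field_simps)
  thus ?thesis using False a b
    by (simp add: Let_def log_divide gg_def jointp_def algebra_simps)
qed

lemma MI_decomp: "MI_W_XY W P V = (\<Sum>w\<in>W. \<Sum>x\<in>UNIV. \<Sum>y\<in>UNIV. pmf P (x,y) * gg (V x y w))
     - (\<Sum>w\<in>W. gg (pW P V w))"
proof -
  have e: "(\<Sum>x\<in>UNIV. \<Sum>y\<in>UNIV. jointp P V w x y * log 2 (pW P V w)) = gg (pW P V w)" for w
    by (simp add: gg_def pW_def sum_distrib_right)
  show ?thesis unfolding MI_W_XY_def MI_term
    by (simp add: sum_subtractf e)
qed

lemma CH_term: "(let p = pWY P V w y in
      if p = 0 then 0 else - p * log 2 (p / pW P V w))
   = - gg (pWY P V w y) + pWY P V w y * log 2 (pW P V w)"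
proof (cases "pWY P V w y = 0")
  case True thus ?thesis by simp
next
  case False
  hence a: "pWY P V w y > 0" using pWYnn[of w y] by auto
  have b: "pW P V w > 0" using pWY_le_pW[of w y] a by linarith
  thus ?thesis using False a b
    by (simp add: Let_def log_divide gg_def algebra_simps)
qed

lemma CH_decomp: "CH_Y_W W P V = (\<Sum>w\<in>W. gg (pW P V w)) - (\<Sum>w\<in>W. \<Sum>y\<in>UNIV. gg (pWY P V w y))"
proof -
  have pw: "pW P V w = (\<Sum>y\<in>UNIV. pWY P V w y)" for w
    unfolding pW_def pWY_def by (rule sum.swap)
  have e: "(\<Sum>y\<in>UNIV. pWY P V w y * log 2 (pW P V w)) = gg (pW P V w)" for w
    by (simp add: gg_def sum_distrib_right[symmetric] pw[symmetric])
  show ?thesis unfolding CH_Y_W_def CH_term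
    by (simp add: sum_subtractf e)
qed

lemma CMI_term: "(let p = jointp P V w x y in
      if p = 0 then 0 else p * log 2 (p * pX P x / (pWX P V w x * pmf P (x, y))))
   = pmf P (x,y) * gg (V x y w) + jointp P V w x y * log 2 (pX P x)
     - jointp P V w x y * log 2 (pWX P V w x)"
proof (cases "jointp P V w x y = 0")
  case True
  hence "pmf P (x,y) = 0 \<or> V x y w = 0" by (simp add: jointp_def)
  thus ?thesis using True by (auto simp: gg_def)
next
  case False
  hence a: "pmf P (x,y) > 0" "V x y w > 0" using Vnn[of x y w] pmf_nonneg[of P "(x,y)"]
    by (auto simp: jointp_def less_le)
  have b: "pWX P V w x > 0" using j_le_pWX[of w x y] False jnn[of w x y] by linarith
  have c: "pX P x > 0" using pmf_le_pX[of x y] a by linarith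
  have "jointp P V w x y * pX P x / (pWX P V w x * pmf P (x, y)) = V x y w * pX P x / pWX P V w x"
    using a by (simp add: jointp_def field_simps)
  thus ?thesis using False a b c
    by (simp add: Let_def log_divide log_mult gg_def jointp_def algebra_simps)
qed

lemma CMI_decomp: "CMI_W_Y_X W P V = (\<Sum>w\<in>W. \<Sum>x\<in>UNIV. \<Sum>y\<in>UNIV. pmf P (x,y) * gg (V x y w))
     + (\<Sum>x\<in>UNIV. gg (pX P x)) - (\<Sum>w\<in>W. \<Sum>x\<in>UNIV. gg (pWX P V w x))"
proof -
  have e1: "(\<Sum>y\<in>UNIV. jointp P V w x y * log 2 (pWX P V w x)) = gg (pWX P V w x)" for w x
    by (simp add: gg_def pWX_def sum_distrib_right)
  have e2: "(\<Sum>w\<in>W. \<Sum>x\<in>UNIV. \<Sum>y\<in>UNIV. jointp P V w x y * log 2 (pX P x))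
      = (\<Sum>x\<in>UNIV. gg (pX P x))"
  proof -
    have "(\<Sum>w\<in>W. \<Sum>x\<in>UNIV. \<Sum>y\<in>UNIV. jointp P V w x y * log 2 (pX P x))
       = (\<Sum>x\<in>UNIV. \<Sum>w\<in>W. \<Sum>y\<in>UNIV. jointp P V w x y * log 2 (pX P x))"
      by (rule sum.swap)
    also have "\<dots> = (\<Sum>x\<in>UNIV. \<Sum>y\<in>UNIV. \<Sum>w\<in>W. jointp P V w x y * log 2 (pX P x))"
      by (rule sum.cong, simp, rule sum.swap)
    also have "\<dots> = (\<Sum>x\<in>UNIV. \<Sum>y\<in>UNIV. pmf P (x,y) * log 2 (pX P x))"
      by (simp add: jointp_def sum_distrib_left[symmetric] sum_distrib_right[symmetric] Vsum
          mult.assoc[symmetric])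
    also have "\<dots> = (\<Sum>x\<in>UNIV. gg (pX P x))"
      by (simp add: gg_def pX_def sum_distrib_right)
    finally show ?thesis .
  qed
  show ?thesis unfolding CMI_W_Y_X_def CMI_term
    by (simp add: sum.distrib sum_subtractf e1 e2[symmetric])
qed

end


lemma lower_bounds:
  fixes P :: "('x::finite \<times> 'y::finite) pmf"
  assumes cd: "cond_dist_on W V"
  shows "MI_W_XY W P V \<ge> - real (card W) / ln 2" "CH_Y_W W P V \<ge> - real (card W) / ln 2"
proof -
  have A: "(\<Sum>w\<in>W. \<Sum>x\<in>UNIV. \<Sum>y\<in>UNIV. pmf P (x,y) * gg (V x y w)) \<ge> - real (card W) / ln 2"
  proof -
    have "(\<Sum>w\<in>W. \<Sum>x\<in>UNIV. \<Sum>y\<in>UNIV. pmf P (x,y) * gg (V x y w))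
        \<ge> (\<Sum>w\<in>W. \<Sum>x\<in>UNIV. \<Sum>y\<in>UNIV. pmf P (x,y) * (- 1 / ln 2))"
      by (intro sum_mono mult_left_mono gg_ge Vnn[OF cd]) auto
    also have "(\<Sum>w\<in>W. \<Sum>x\<in>UNIV. \<Sum>y\<in>UNIV. pmf P (x,y) * (- 1 / ln 2))
       = (\<Sum>w\<in>W. (\<Sum>x\<in>UNIV. \<Sum>y\<in>UNIV. pmf P (x,y)) * (- 1 / ln 2))"
      by (simp only: sum_distrib_right)
    also have "\<dots> = - real (card W) / ln 2" by (simp add: sum_pmf1)
    finally show ?thesis .
  qed
  have B: "(\<Sum>w\<in>W. gg (pW P V w)) \<le> 0"
    by (intro sum_nonpos gg_le0 pWnn[OF cd] pW_le1[OF cd])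
  show "MI_W_XY W P V \<ge> - real (card W) / ln 2" using A B by (simp add: MI_decomp[OF cd])
  have C: "(\<Sum>w\<in>W. \<Sum>y\<in>UNIV. gg (pWY P V w y)) \<le> 0"
    by (intro sum_nonpos gg_le0 pWYnn[OF cd] order_trans[OF pWY_le_pW[OF cd] pW_le1[OF cd]])
  have D: "(\<Sum>w\<in>W. gg (pW P V w)) \<ge> (\<Sum>w\<in>W. - 1 / ln 2)"
    by (intro sum_mono gg_ge pWnn[OF cd])
  show "CH_Y_W W P V \<ge> - real (card W) / ln 2" using C D by (simp add: CH_decomp[OF cd])
qed

lemma extend:
  fixes P :: "('x::finite \<times> 'y::finite) pmf"
  assumes cd: "cond_dist_on W V" and sub: "W \<subseteq> W2" and f2: "finite W2"
  shows "cond_dist_on W2 V" "MI_W_XY W2 P V = MI_W_XY W P V" "CH_Y_W W2 P V = CH_Y_W W P V"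
    "CMI_W_Y_X W2 P V = CMI_W_Y_X W P V"
proof -
  have out: "w \<in> W2 - W \<Longrightarrow> V x y w = 0" for w x y using Vout[OF cd] by auto
  have "(\<Sum>w\<in>W2. V x y w) = (\<Sum>w\<in>W. V x y w)" for x y
    by (rule sum.mono_neutral_right[OF f2 sub]) (auto simp: out)
  moreover have "\<forall>x y w. w \<notin> W2 \<longrightarrow> V x y w = 0" using Vout[OF cd] sub by blast
  ultimately show cd2: "cond_dist_on W2 V" using cd f2 unfolding cond_dist_on_def by auto
  have out2: "w \<in> W2 - W \<Longrightarrow> pW P V w = 0 \<and> pWY P V w y = 0 \<and> pWX P V w x = 0" for w x y
    by (simp add: pW_def pWY_def pWX_def jointp_def out)
  show "MI_W_XY W2 P V = MI_W_XY W P V" unfolding MI_decomp[OF cd] MI_decomp[OF cd2]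
    by (intro arg_cong2[where f="(-)"] sum.mono_neutral_right[OF f2 sub]) (auto simp: out out2)
  show "CH_Y_W W2 P V = CH_Y_W W P V" unfolding CH_decomp[OF cd] CH_decomp[OF cd2]
    by (intro arg_cong2[where f="(-)"] sum.mono_neutral_right[OF f2 sub]) (auto simp: out2)
  show "CMI_W_Y_X W2 P V = CMI_W_Y_X W P V" unfolding CMI_decomp[OF cd] CMI_decomp[OF cd2]
    by (intro arg_cong2[where f="(-)"] arg_cong2[where f="(+)"] sum.mono_neutral_right[OF f2 sub] refl)
       (auto simp: out out2)
qed

lemma relabel:
  fixes P :: "('x::finite \<times> 'y::finite) pmf"
  assumes cd: "cond_dist_on W V" and cw: "card W \<le> K"
  shows "\<exists>V'. cond_dist_on {0..<K} V' \<and> MI_W_XY {0..<K} P V' = MI_W_XY W P V \<and>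
      CH_Y_W {0..<K} P V' = CH_Y_W W P V \<and> CMI_W_Y_X {0..<K} P V' = CMI_W_Y_X W P V"
proof -
  have fW: "finite W" using cd by (simp add: cond_dist_on_def)
  obtain h where h: "bij_betw h W {0..<card W}" using ex_bij_betw_finite_nat[OF fW] by blast
  define hi where "hi = inv_into W h"
  have hih: "w \<in> W \<Longrightarrow> hi (h w) = w" for w using h unfolding hi_def
    by (simp add: bij_betw_def)
  have hW: "w \<in> W \<Longrightarrow> h w < card W" for w using h by (auto simp: bij_betw_def)
  define V' where "V' = (\<lambda>x y w. if w < card W then V x y (hi w) else 0)"
  have VV: "w \<in> W \<Longrightarrow> V' x y (h w) = V x y w" for x y w by (simp add: V'_def hih hW)
  have jj: "w \<in> W \<Longrightarrow> jointp P V' (h w) x y = jointp P V w x y" for x y w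
    by (simp add: jointp_def VV)
  have pp: "w \<in> W \<Longrightarrow> pW P V' (h w) = pW P V w" "w \<in> W \<Longrightarrow> pWY P V' (h w) y = pWY P V w y"
     "w \<in> W \<Longrightarrow> pWX P V' (h w) x = pWX P V w x" for x y w
    by (simp_all add: pW_def pWY_def pWX_def jj)
  have cd1: "cond_dist_on {0..<card W} V'"
  proof -
    have "(\<Sum>w\<in>{0..<card W}. V' x y w) = (\<Sum>w\<in>W. V' x y (h w))" for x y
      by (rule sum.reindex_bij_betw[OF h, symmetric])
    also have "\<dots> x y = 1" for x y using VV Vsum[OF cd] by simp
    finally show ?thesis using Vnn[OF cd] by (auto simp: cond_dist_on_def V'_def)
  qed
  have r1: "MI_W_XY {0..<card W} P V' = MI_W_XY W P V"
    unfolding MI_W_XY_def sum.reindex_bij_betw[OF h, symmetric]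
    by (intro sum.cong refl) (simp add: jj pp Let_def)
  have r2: "CH_Y_W {0..<card W} P V' = CH_Y_W W P V"
    unfolding CH_Y_W_def sum.reindex_bij_betw[OF h, symmetric]
    by (intro sum.cong refl) (simp add: pp Let_def)
  have r3: "CMI_W_Y_X {0..<card W} P V' = CMI_W_Y_X W P V"
    unfolding CMI_W_Y_X_def sum.reindex_bij_betw[OF h, symmetric]
    by (intro sum.cong refl) (simp add: jj pp Let_def)
  have sub: "{0..<card W} \<subseteq> {0..<K}" using cw by auto
  show ?thesis using extend[OF cd1 sub] r1 r2 r3 by auto
qed


lemma finite_subseq:
  fixes s :: "nat \<Rightarrow> 'a \<Rightarrow> real"
  assumes "finite I" "\<And>n i. i \<in> I \<Longrightarrow> \<bar>s n i\<bar> \<le> B"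
  shows "\<exists>r. strict_mono r \<and> (\<forall>i\<in>I. convergent (\<lambda>n. s (r n) i))"
  using assms
proof (induction I rule: finite_induct)
  case empty
  show ?case by (rule exI[of _ id]) (auto simp: strict_mono_def)
next
  case (insert i I)
  then obtain r where r: "strict_mono r" "\<forall>j\<in>I. convergent (\<lambda>n. s (r n) j)" by auto
  obtain r' where r': "strict_mono r'" "monoseq (\<lambda>n. s (r (r' n)) i)"
    using seq_monosub[of "\<lambda>n. s (r n) i"] by auto
  have "Bseq (\<lambda>n. s (r (r' n)) i)" using insert.prems by (intro BseqI'[of _ B]) auto
  hence ci: "convergent (\<lambda>n. s (r (r' n)) i)" using r'(2) Bseq_monoseq_convergent by blast
  have "convergent (\<lambda>n. s (r (r' n)) j)" if "j \<in> I" for j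
  proof -
    from r(2) that obtain L where "(\<lambda>n. s (r n) j) \<longlonglongrightarrow> L" by (auto simp: convergent_def)
    from LIMSEQ_subseq_LIMSEQ[OF this r'(1)] show ?thesis by (auto simp: convergent_def o_def)
  qed
  thus ?case using ci strict_mono_o[OF r(1) r'(1)] by (intro exI[of _ "r \<circ> r'"]) (auto simp: o_def)
qed

lemma limit_dist:
  fixes P :: "('x::finite \<times> 'y::finite) pmf"
  assumes cd: "\<And>n. cond_dist_on W (Vs n)" and fW: "finite W"
    and lim: "\<And>x y w. (\<lambda>n. Vs n x y w) \<longlonglongrightarrow> V x y w"
  shows "cond_dist_on W V" "(\<lambda>n. MI_W_XY W P (Vs n)) \<longlonglongrightarrow> MI_W_XY W P V"
    "(\<lambda>n. CH_Y_W W P (Vs n)) \<longlonglongrightarrow> CH_Y_W W P V"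
    "(\<lambda>n. CMI_W_Y_X W P (Vs n)) \<longlonglongrightarrow> CMI_W_Y_X W P V"
proof -
  have nn: "V x y w \<ge> 0" for x y w using Vnn[OF cd] by (intro LIMSEQ_le_const[OF lim]) auto
  have out: "w \<notin> W \<Longrightarrow> V x y w = 0" for x y w
  proof -
    assume "w \<notin> W"
    hence "(\<lambda>n. Vs n x y w) = (\<lambda>n. 0)" using Vout[OF cd] by auto
    thus ?thesis using lim[of x y w] LIMSEQ_unique by (metis tendsto_const)
  qed
  have sm: "(\<Sum>w\<in>W. V x y w) = 1" for x y
  proof -
    have "(\<lambda>n. \<Sum>w\<in>W. Vs n x y w) \<longlonglongrightarrow> (\<Sum>w\<in>W. V x y w)" by (intro tendsto_sum lim)
    moreover have "(\<lambda>n. \<Sum>w\<in>W. Vs n x y w) = (\<lambda>n. 1)" using Vsum[OF cd] by auto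
    ultimately show ?thesis using LIMSEQ_unique by (metis tendsto_const)
  qed
  show cdV: "cond_dist_on W V" using nn out sm fW by (auto simp: cond_dist_on_def)
  have lW: "(\<lambda>n. pW P (Vs n) w) \<longlonglongrightarrow> pW P V w" for w
    unfolding pW_def jointp_def by (intro tendsto_intros lim)
  have lWY: "(\<lambda>n. pWY P (Vs n) w y) \<longlonglongrightarrow> pWY P V w y" for w y
    unfolding pWY_def jointp_def by (intro tendsto_intros lim)
  have lWX: "(\<lambda>n. pWX P (Vs n) w x) \<longlonglongrightarrow> pWX P V w x" for w x
    unfolding pWX_def jointp_def by (intro tendsto_intros lim)
  have g1: "(\<lambda>n. gg (Vs n x y w)) \<longlonglongrightarrow> gg (V x y w)" for x y w
    by (intro gg_tendsto lim Vnn[OF cd])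
  have g2: "(\<lambda>n. gg (pW P (Vs n) w)) \<longlonglongrightarrow> gg (pW P V w)" for w
    by (intro gg_tendsto lW pWnn[OF cd])
  have g3: "(\<lambda>n. gg (pWY P (Vs n) w y)) \<longlonglongrightarrow> gg (pWY P V w y)" for w y
    by (intro gg_tendsto lWY pWYnn[OF cd])
  have g4: "(\<lambda>n. gg (pWX P (Vs n) w x)) \<longlonglongrightarrow> gg (pWX P V w x)" for w x
    by (intro gg_tendsto lWX pWXnn[OF cd])
  show "(\<lambda>n. MI_W_XY W P (Vs n)) \<longlonglongrightarrow> MI_W_XY W P V"
    unfolding MI_decomp[OF cd] MI_decomp[OF cdV] by (intro tendsto_intros g1 g2)
  show "(\<lambda>n. CH_Y_W W P (Vs n)) \<longlonglongrightarrow> CH_Y_W W P V"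
    unfolding CH_decomp[OF cd] CH_decomp[OF cdV] by (intro tendsto_intros g3 g2)
  show "(\<lambda>n. CMI_W_Y_X W P (Vs n)) \<longlonglongrightarrow> CMI_W_Y_X W P V"
    unfolding CMI_decomp[OF cd] CMI_decomp[OF cdV] by (intro tendsto_intros g1 g4)
qed


theorem lemma3:
  fixes P :: "('x::finite \<times> 'y::finite) pmf" and \<mu> :: real
  assumes "\<mu> \<ge> 0"
  shows "((\<lambda>\<delta>. R_mu \<mu> \<delta> P) \<longlongrightarrow> R_mu \<mu> 0 P) (at_right 0)"
proof -
  note mu = assms
  define K where "K = CARD('x) * CARD('y) + 2"
  define S where "S = (\<lambda>\<delta>. {r0 + \<mu> * r2 |r0 r2. (r0, r2) \<in> WAK_region \<delta> P})"
  have R: "R_mu \<mu> \<delta> P = Inf (S \<delta>)" for \<delta> by (simp add: R_mu_def S_def)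
  have ln2: "ln (2::real) > 0" by simp
  have bdd: "bdd_below (S \<delta>)" for \<delta>
  proof (rule bdd_belowI)
    fix s assume "s \<in> S \<delta>"
    then obtain r0 r2 W V where s: "s = r0 + \<mu> * r2" and cd: "cond_dist_on W V"
      and cw: "card W \<le> K" and h: "r0 \<ge> MI_W_XY W P V" "r2 \<ge> CH_Y_W W P V"
      by (auto simp: S_def WAK_region_def K_def)
    have kk: "- real K / ln 2 \<le> - real (card W) / ln 2" using cw ln2 by (simp add: divide_right_mono)
    have "r0 \<ge> - real K / ln 2" using lower_bounds(1)[OF cd, of P] h kk by linarith
    moreover have "r2 \<ge> - real K / ln 2" using lower_bounds(2)[OF cd, of P] h kk by linarith
    hence "\<mu> * r2 \<ge> \<mu> * (- real K / ln 2)" using mu by (intro mult_left_mono) auto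
    ultimately show "- real K / ln 2 + \<mu> * (- real K / ln 2) \<le> s" using s by linarith
  qed
  have mono: "S \<delta> \<subseteq> S \<delta>'" if "\<delta> \<le> \<delta>'" for \<delta> \<delta>'
    using that unfolding S_def WAK_region_def by fastforce
  have regS: "MI_W_XY W P V + \<mu> * CH_Y_W W P V \<in> S \<delta>"
    if "cond_dist_on W V" "card W \<le> K" "CMI_W_Y_X W P V \<le> \<delta>" for W V \<delta>
    using that unfolding S_def WAK_region_def K_def by fastforce
  have ne: "S 0 \<noteq> {}"
  proof -
    define V0 where "V0 = (\<lambda>(x::'x) (y::'y) w::nat. if w = 0 then (1::real) else 0)"
    have cd: "cond_dist_on {0} V0" by (simp add: cond_dist_on_def V0_def)
    have "pWX P V0 0 x = pX P x" for x by (simp add: pWX_def pX_def jointp_def V0_def)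
    moreover have "V0 x y 0 = 1" for x y by (simp add: V0_def)
    ultimately have "CMI_W_Y_X {0} P V0 = 0" by (simp add: CMI_decomp[OF cd])
    moreover have "card {0::nat} \<le> K" by (simp add: K_def)
    ultimately have "MI_W_XY {0} P V0 + \<mu> * CH_Y_W {0} P V0 \<in> S 0" using regS[OF cd] by simp
    thus ?thesis by auto
  qed
  have neS: "S \<delta> \<noteq> {}" if "\<delta> \<ge> 0" for \<delta> using ne mono[OF that] by blast
  have Rle0: "Inf (S \<delta>) \<le> Inf (S 0)" if "\<delta> \<ge> 0" for \<delta>
    by (rule cInf_superset_mono[OF ne bdd mono[OF that]])
  have Rmono: "Inf (S \<delta>') \<le> Inf (S \<delta>)" if "0 \<le> \<delta>" "\<delta> \<le> \<delta>'" for \<delta> \<delta>'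
    by (rule cInf_superset_mono[OF neS[OF that(1)] bdd mono[OF that(2)]])
  have key: "\<exists>\<delta>0>0. a < Inf (S \<delta>0)" if a: "a < Inf (S 0)" for a
  proof (rule ccontr)
    assume "\<not> ?thesis"
    hence le: "Inf (S \<delta>) \<le> a" if "\<delta> > 0" for \<delta> using that by force
    define a' where "a' = (a + Inf (S 0)) / 2"
    have aa: "a < a'" "a' < Inf (S 0)" using a by (auto simp: a'_def)
    have "\<exists>V'. cond_dist_on {0..<K} V' \<and> MI_W_XY {0..<K} P V' + \<mu> * CH_Y_W {0..<K} P V' < a'
         \<and> CMI_W_Y_X {0..<K} P V' \<le> inverse (real (Suc n))" for n
    proof -
      have ip: "inverse (real (Suc n)) > 0" by simp
      have "Inf (S (inverse (real (Suc n)))) < a'" using le[OF ip] aa by linarith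
      from cInf_lessD[OF neS[OF less_imp_le[OF ip]] this] obtain s
        where "s \<in> S (inverse (real (Suc n)))" "s < a'" by blast
      then obtain r0 r2 W V where s: "s = r0 + \<mu> * r2" and cd: "cond_dist_on W V"
        and cw: "card W \<le> K" and h: "r0 \<ge> MI_W_XY W P V" "r2 \<ge> CH_Y_W W P V"
        "CMI_W_Y_X W P V \<le> inverse (real (Suc n))" and sa: "s < a'"
        by (auto simp: S_def WAK_region_def K_def)
      obtain V' where V': "cond_dist_on {0..<K} V'" "MI_W_XY {0..<K} P V' = MI_W_XY W P V"
        "CH_Y_W {0..<K} P V' = CH_Y_W W P V" "CMI_W_Y_X {0..<K} P V' = CMI_W_Y_X W P V"
        using relabel[OF cd cw, of P] by blast
      have "\<mu> * CH_Y_W W P V \<le> \<mu> * r2" using h mu by (intro mult_left_mono) auto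
      thus ?thesis using V' h s sa by (intro exI[of _ V']) auto
    qed
    then obtain Vs where Vs: "\<And>n. cond_dist_on {0..<K} (Vs n)"
      "\<And>n. MI_W_XY {0..<K} P (Vs n) + \<mu> * CH_Y_W {0..<K} P (Vs n) < a'"
      "\<And>n. CMI_W_Y_X {0..<K} P (Vs n) \<le> inverse (real (Suc n))"
      by metis
    have bnd: "\<bar>(\<lambda>n (x, y, w). Vs n x y w) n i\<bar> \<le> 1" for n i
      using Vnn[OF Vs(1)] V_le1[OF Vs(1)] by (cases i) auto
    obtain r where r: "strict_mono r"
      "\<forall>i\<in>(UNIV::'x set) \<times> (UNIV::'y set) \<times> {0..<K}.
         convergent (\<lambda>n. (\<lambda>n (x, y, w). Vs n x y w) (r n) i)"
      using finite_subseq[of "(UNIV::'x set) \<times> (UNIV::'y set) \<times> {0..<K}"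
          "\<lambda>n (x, y, w). Vs n x y w" 1] bnd by auto
    have conv: "convergent (\<lambda>n. Vs (r n) x y w)" for x y w
    proof (cases "w < K")
      case True thus ?thesis using r(2) by (auto dest: bspec[of _ _ "(x, y, w)"])
    next
      case False
      hence "(\<lambda>n. Vs (r n) x y w) = (\<lambda>n. 0)" using Vout[OF Vs(1)] by auto
      thus ?thesis by (simp add: convergent_const)
    qed
    define V where "V = (\<lambda>x y w. lim (\<lambda>n. Vs (r n) x y w))"
    have lim: "(\<lambda>n. Vs (r n) x y w) \<longlonglongrightarrow> V x y w" for x y w
      using conv[of x y w] by (simp add: V_def convergent_LIMSEQ_iff)
    note L = limit_dist[where W="{0..<K}" and Vs="\<lambda>n. Vs (r n)" and V=V, OF Vs(1) _ lim, simplified]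
    have "(\<lambda>n. MI_W_XY {0..<K} P (Vs (r n)) + \<mu> * CH_Y_W {0..<K} P (Vs (r n)))
        \<longlonglongrightarrow> MI_W_XY {0..<K} P V + \<mu> * CH_Y_W {0..<K} P V"
      by (intro tendsto_intros L)
    hence v1: "MI_W_XY {0..<K} P V + \<mu> * CH_Y_W {0..<K} P V \<le> a'"
      using Vs(2) by (intro LIMSEQ_le_const2) (auto intro: less_imp_le)
    have "CMI_W_Y_X {0..<K} P (Vs (r n)) \<le> inverse (real (Suc n))" for n
    proof -
      have "n \<le> r n" using seq_suble[OF r(1)] .
      hence "inverse (real (Suc (r n))) \<le> inverse (real (Suc n))"
        by (intro le_imp_inverse_le) auto
      thus ?thesis using Vs(3)[of "r n"] by linarith
    qed
    hence v2: "CMI_W_Y_X {0..<K} P V \<le> 0"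
      by (intro LIMSEQ_le[OF L(4) LIMSEQ_inverse_real_of_nat]) auto
    have "MI_W_XY {0..<K} P V + \<mu> * CH_Y_W {0..<K} P V \<in> S 0"
      by (rule regS[OF L(1) _ v2]) simp
    hence "Inf (S 0) \<le> MI_W_XY {0..<K} P V + \<mu> * CH_Y_W {0..<K} P V"
      by (rule cInf_lower[OF _ bdd])
    thus False using v1 aa by linarith
  qed
  show ?thesis unfolding R
  proof (rule order_tendstoI)
    fix a assume "a < Inf (S 0)"
    then obtain \<delta>0 where d0: "\<delta>0 > 0" "a < Inf (S \<delta>0)" using key by blast
    show "\<forall>\<^sub>F \<delta> in at_right 0. a < Inf (S \<delta>)" unfolding eventually_at_right_field
    proof (intro exI[of _ \<delta>0] conjI allI impI)
      fix y :: real assume "0 < y" "y < \<delta>0"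
      thus "a < Inf (S y)" using d0 Rmono[of y \<delta>0] by linarith
    qed (use d0 in auto)
  next
    fix a assume "Inf (S 0) < a"
    thus "\<forall>\<^sub>F \<delta> in at_right 0. Inf (S \<delta>) < a" unfolding eventually_at_right_field
    proof (intro exI[of _ 1] conjI allI impI)
      fix y :: real assume "0 < y"
      thus "Inf (S y) < a" using Rle0[of y] \<open>Inf (S 0) < a\<close> by linarith
    qed auto
  qed
qed

end
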